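(* Let $d\ge 2$. There is a constant $C_d$ depending only on $d$ such that for all $r>0$ and $\delta>0$, $$\Bigl|\int_0^{\pi}\Delta_\delta(r\cos\theta)\cos\theta\,(\sin\theta)^{d-2}\,d\theta\Bigr|\le C_d\,\frac{\delta^{(d+1)/2}}{r^{(d-1)/2}}.$$
   Context: For $\delta>0$, $Q_\delta(t):=\delta\lfloor t/\delta+1/2\rfloor$ and $\Delta_\delta(t):=t-Q_\delta(t)$. *)

theory Defs
  imports "HOL-Analysis.Analysis"
begin

definition Qd :: "real \<Rightarrow> real \<Rightarrow> real" where
  "Qd \<delta> t = \<delta> * of_int \<lfloor>t / \<delta> + 1/2\<rfloor>"

definition Dd :: "real \<Rightarrow> real \<Rightarrow> real" where
  "Dd \<delta> t = t - Qd \<delta> t"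

end

theory Submission
  imports Defs
begin


lemma Dd_periodic: assumes "\<delta> > 0" shows "Dd \<delta> (s + \<delta>) = Dd \<delta> s"
proof -
  have "(s + \<delta>) / \<delta> + 1/2 = (s/\<delta> + 1/2) + 1" using assms by (simp add: field_simps)
  then have "\<lfloor>(s + \<delta>) / \<delta> + 1/2\<rfloor> = \<lfloor>s/\<delta> + 1/2\<rfloor> + 1" by (metis floor_add_int of_int_1)
  then show ?thesis unfolding Dd_def Qd_def by (simp add: algebra_simps)
qed

lemma Dd_eq: assumes "\<delta> > 0" shows "Dd \<delta> s = \<delta> * (s/\<delta> - of_int \<lfloor>s/\<delta> + 1/2\<rfloor>)"
  using assms unfolding Dd_def Qd_def by (simp add: algebra_simps)

lemma Dd_bound: assumes "\<delta> > 0" shows "\<bar>Dd \<delta> s\<bar> \<le> \<delta>/2"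
proof -
  let ?x = "s/\<delta>"
  have "of_int \<lfloor>?x + 1/2\<rfloor> \<le> ?x + 1/2" by (rule of_int_floor_le)
  moreover have "?x + 1/2 < of_int \<lfloor>?x + 1/2\<rfloor> + 1" by (rule real_of_int_floor_add_one_gt)
  ultimately have "\<bar>?x - of_int \<lfloor>?x + 1/2\<rfloor>\<bar> \<le> 1/2" by linarith
  then have "\<bar>\<delta> * (?x - of_int \<lfloor>?x + 1/2\<rfloor>)\<bar> \<le> \<delta> * (1/2)" using assms
    by (simp add: abs_mult)
  then show ?thesis using Dd_eq[OF assms] by simp
qed

lemma Dd_small: assumes "\<delta> > 0" "-\<delta>/2 \<le> s" "s < \<delta>/2" shows "Dd \<delta> s = s"
proof -
  have "0 \<le> s/\<delta> + 1/2" "s/\<delta> + 1/2 < 1" using assms by (auto simp: field_simps)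
  then have "\<lfloor>s/\<delta> + 1/2\<rfloor> = 0" by (simp add: floor_eq_iff)
  then show ?thesis unfolding Dd_def Qd_def by simp
qed

lemma Dd_isCont: assumes "\<delta> > 0" "s/\<delta> + 1/2 \<notin> \<int>" shows "isCont (Dd \<delta>) s"
proof -
  have "((\<lambda>x. \<lfloor>x/\<delta> + 1/2\<rfloor>) has_real_derivative 0) (at s)"
    by (rule floor_has_real_derivative) (use assms in \<open>auto intro!: continuous_intros\<close>)
  hence "isCont (\<lambda>x. real_of_int \<lfloor>x/\<delta> + 1/2\<rfloor>) s" by (rule DERIV_isCont)
  then show ?thesis unfolding Dd_def[abs_def] Qd_def by (auto intro!: continuous_intros)
qed

lemma Dd_meas: "Dd \<delta> \<in> borel_measurable borel"
  unfolding Dd_def[abs_def] Qd_def by measurable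



lemma per_iter: fixes g :: "real \<Rightarrow> 'b" and a x \<delta> :: real
  assumes "\<forall>s\<ge>a. g (s+\<delta>) = g s" "x \<ge> a" "\<delta> \<ge> 0"
  shows "g (x + real n * \<delta>) = g x"
proof (induction n)
  case 0 then show ?case by simp
next
  case (Suc n)
  have "x + real n * \<delta> \<ge> a" using assms by (simp add: add_increasing2)
  then have "g (x + real n * \<delta> + \<delta>) = g (x + real n * \<delta>)" using assms(1) by blast
  then show ?case using Suc by (simp add: algebra_simps)
qed

lemma per_bound: fixes g :: "real \<Rightarrow> real"
  assumes "\<delta> > 0" "\<forall>s\<ge>a. g (s+\<delta>) = g s"
  "\<And>s. a \<le> s \<Longrightarrow> s \<le> a+\<delta> \<Longrightarrow> \<bar>g s\<bar> \<le> M" "s \<ge> a"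
  shows "\<bar>g s\<bar> \<le> M"
proof -
  define n where "n = nat \<lfloor>(s-a)/\<delta>\<rfloor>"
  have "0 \<le> (s-a)/\<delta>" using assms by simp
  then have n1: "real n \<le> (s-a)/\<delta>" and n2: "(s-a)/\<delta> < real n + 1"
    unfolding n_def by linarith+
  define x where "x = s - real n * \<delta>"
  have "real n * \<delta> \<le> s - a" using n1 assms(1) by (simp add: field_simps)
  then have xa: "a \<le> x" unfolding x_def by simp
  have "s - a < (real n + 1) * \<delta>" using n2 assms(1) by (simp add: field_simps)
  then have xb: "x \<le> a + \<delta>" unfolding x_def by (simp add: algebra_simps)
  have "g s = g (x + real n * \<delta>)" unfolding x_def by simp
  also have "\<dots> = g x" using per_iter[OF assms(2) xa] assms(1) by simp
  finally show ?thesis using assms(3)[OF xa xb] by simp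
qed

lemma per_int: fixes f :: "real \<Rightarrow> real"
  assumes d: "\<delta> > 0" and fi: "\<And>b. f integrable_on {a..b}" and per: "\<forall>s\<ge>a. f(s+\<delta>) = f s"
  and "s \<ge> a"
  shows "integral {s..s+\<delta>} f = integral {a..a+\<delta>} f"
proof -
  have int: "f integrable_on {x..y}" if "a \<le> x" for x y
  proof (cases "x \<le> y")
    case True then show ?thesis using integrable_subinterval_real[OF fi[of y], of x y] that by auto
  next
    case False then show ?thesis by (simp add: integrable_on_empty)
  qed
  define H where "H t = integral {t..t+\<delta>} f" for t
  have shift: "H (t+\<delta>) = H t" if "t \<ge> a" for t
  proof -
    have "integral {t..t+\<delta>} (f \<circ> (+) \<delta>) = integral {t+\<delta>..t+\<delta>+\<delta>} f"
      by (rule integral_shift_Icc_real)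
    moreover have "integral {t..t+\<delta>} (f \<circ> (+) \<delta>) = integral {t..t+\<delta>} f"
      by (rule integral_cong) (use per that in \<open>auto simp: add.commute\<close>)
    ultimately show ?thesis unfolding H_def by simp
  qed
  have base: "\<bar>H t - H a\<bar> \<le> 0" if "a \<le> t" "t \<le> a + \<delta>" for t
  proof -
    have e1: "integral {a..a+\<delta>} f = integral {a..t} f + integral {t..a+\<delta>} f"
      using Henstock_Kurzweil_Integration.integral_combine[where a=a and c=t and b="a+\<delta>" and f=f] int[of a "a+\<delta>"] that by simp
    have e2: "integral {t..t+\<delta>} f = integral {t..a+\<delta>} f + integral {a+\<delta>..t+\<delta>} f"
      using Henstock_Kurzweil_Integration.integral_combine[where a=t and c="a+\<delta>" and b="t+\<delta>" and f=f] int[of t "t+\<delta>"] that d by simp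
    have "integral {a..t} (f \<circ> (+) \<delta>) = integral {a+\<delta>..t+\<delta>} f"
      by (rule integral_shift_Icc_real)
    moreover have "integral {a..t} (f \<circ> (+) \<delta>) = integral {a..t} f"
      by (rule integral_cong) (use per that in \<open>auto simp: add.commute\<close>)
    ultimately show ?thesis unfolding H_def using e1 e2 by simp
  qed
  have "\<bar>(\<lambda>t. H t - H a) s\<bar> \<le> 0"
    by (rule per_bound[OF d _ base assms(4)]) (use shift in auto)
  then show ?thesis unfolding H_def by simp
qed

lemma int_bound: fixes f :: "real \<Rightarrow> real"
  assumes "f integrable_on {a..b}" "a \<le> b" "\<And>x. x\<in>{a..b} \<Longrightarrow> \<bar>f x\<bar> \<le> B"
  shows "\<bar>integral {a..b} f\<bar> \<le> B*(b-a)"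
proof -
  have "integral {a..b} f \<le> integral {a..b} (\<lambda>x. B)"
    by (rule integral_le) (use assms in \<open>auto simp: abs_le_iff\<close>)
  moreover have "integral {a..b} (\<lambda>x. -B) \<le> integral {a..b} f"
    by (rule integral_le) (use assms in \<open>force simp: abs_le_iff\<close>)+
  ultimately show ?thesis using assms(2) by (simp add: mult.commute)
qed

definition prim :: "real \<Rightarrow> real \<Rightarrow> (real \<Rightarrow> real) \<Rightarrow> real \<Rightarrow> real" where
  "prim a \<delta> f = (\<lambda>s. integral {a..s} f - integral {a..a+\<delta>} (\<lambda>x. integral {a..x} f) / \<delta>)"

lemma prim_props: fixes f :: "real \<Rightarrow> real"
  assumes d: "\<delta> > 0" and fi: "\<And>b. f integrable_on {a..b}" and per: "\<forall>s\<ge>a. f(s+\<delta>) = f s"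
    and bd: "\<forall>s\<ge>a. \<bar>f s\<bar> \<le> B" and mz: "\<forall>s\<ge>a. integral {s..s+\<delta>} f = 0"
  shows "\<And>b. continuous_on {a..b} (prim a \<delta> f)"
    and "\<forall>s\<ge>a. prim a \<delta> f (s+\<delta>) = prim a \<delta> f s"
    and "\<forall>s\<ge>a. \<bar>prim a \<delta> f s\<bar> \<le> 2*\<delta>*B"
    and "\<forall>s\<ge>a. integral {s..s+\<delta>} (prim a \<delta> f) = 0"
proof -
  define G where "G s = integral {a..s} f" for s
  define c where "c = integral {a..a+\<delta>} G / \<delta>"
  have F: "prim a \<delta> f = (\<lambda>s. G s - c)" unfolding prim_def G_def[abs_def] c_def by simp
  have Gc: "continuous_on {a..b} G" for b unfolding G_def[abs_def]
    by (rule indefinite_integral_continuous_1[OF fi])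
  show cont: "continuous_on {a..b} (prim a \<delta> f)" for b
    unfolding F by (intro continuous_intros Gc)
  have Gper: "\<forall>s\<ge>a. G (s+\<delta>) = G s"
  proof (intro allI impI)
    fix s assume "a \<le> s"
    then have "G (s+\<delta>) = G s + integral {s..s+\<delta>} f"
      unfolding G_def using Henstock_Kurzweil_Integration.integral_combine[where a=a and c=s and b="s+\<delta>" and f=f] fi[of "s+\<delta>"] d \<open>a \<le> s\<close> by simp
    then show "G (s+\<delta>) = G s" using mz \<open>a \<le> s\<close> by simp
  qed
  show "\<forall>s\<ge>a. prim a \<delta> f (s+\<delta>) = prim a \<delta> f s" unfolding F using Gper by simp
  have B0: "0 \<le> B" using bd[rule_format, of a] by simp
  have Gb: "\<bar>G s\<bar> \<le> \<delta>*B" if "s \<ge> a" for s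
  proof (rule per_bound[OF d Gper _ that])
    fix t assume t: "a \<le> t" "t \<le> a+\<delta>"
    have "\<bar>integral {a..t} f\<bar> \<le> B * (t-a)"
      by (rule int_bound[OF fi]) (use bd t in auto)
    also have "\<dots> \<le> B * \<delta>" using t B0 by (simp add: mult_left_mono)
    finally show "\<bar>G t\<bar> \<le> \<delta>*B" unfolding G_def by (simp add: mult.commute)
  qed
  have "\<bar>integral {a..a+\<delta>} G\<bar> \<le> (\<delta>*B) * (a+\<delta>-a)"
    by (rule int_bound[OF integrable_continuous_real[OF Gc]]) (use Gb B0 d in auto)
  then have "\<bar>integral {a..a+\<delta>} G\<bar> \<le> \<delta> * (\<delta>*B)" using d by (simp add: algebra_simps)
  then have cb: "\<bar>c\<bar> \<le> \<delta>*B" unfolding c_def using d by (simp add: divide_le_eq abs_divide mult_ac)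
  show "\<forall>s\<ge>a. \<bar>prim a \<delta> f s\<bar> \<le> 2*\<delta>*B"
  proof (intro allI impI)
    fix s assume "a \<le> s"
    then have "\<bar>G s\<bar> \<le> \<delta>*B" by (rule Gb)
    then show "\<bar>prim a \<delta> f s\<bar> \<le> 2*\<delta>*B" unfolding F using cb by simp
  qed
  show "\<forall>s\<ge>a. integral {s..s+\<delta>} (prim a \<delta> f) = 0"
  proof (intro allI impI)
    fix s assume "a \<le> s"
    have "integral {s..s+\<delta>} (prim a \<delta> f) = integral {a..a+\<delta>} (prim a \<delta> f)"
      by (rule per_int[OF d integrable_continuous_real[OF cont]]) (use Gper \<open>a \<le> s\<close> F in auto)
    also have "\<dots> = integral {a..a+\<delta>} G - integral {a..a+\<delta>} (\<lambda>s. c)"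
      unfolding F by (rule integral_diff) (auto intro!: integrable_continuous_real Gc)
    also have "\<dots> = 0" unfolding c_def using d by simp
    finally show "integral {s..s+\<delta>} (prim a \<delta> f) = 0" .
  qed
qed



lemma Dd_integrable: assumes "\<delta> > 0" shows "Dd \<delta> integrable_on {a..b}"
proof -
  have "Dd \<delta> absolutely_integrable_on {a..b}"
  proof (rule measurable_bounded_by_integrable_imp_absolutely_integrable)
    show "Dd \<delta> \<in> borel_measurable (lebesgue_on {a..b})"
      using Dd_meas by (simp add: measurable_completion measurable_restrict_space1)
    show "(\<lambda>x. \<delta>/2) integrable_on {a..b}" by (intro integrable_continuous_real continuous_intros)
    show "norm (Dd \<delta> x) \<le> \<delta>/2" if "x \<in> {a..b}" for x using Dd_bound[OF assms] by simp
  qed simp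
  then show ?thesis by (rule set_lebesgue_integral_eq_integral(1))
qed

lemma Dd_mean: assumes d: "\<delta> > 0" and a: "a \<le> -\<delta>/2" and s: "s \<ge> a"
  shows "integral {s..s+\<delta>} (Dd \<delta>) = 0"
proof -
  have per: "\<forall>s\<ge>a. Dd \<delta> (s+\<delta>) = Dd \<delta> s" using Dd_periodic[OF d] by simp
  have "integral {s..s+\<delta>} (Dd \<delta>) = integral {a..a+\<delta>} (Dd \<delta>)"
    by (rule per_int[OF d Dd_integrable[OF d] per s])
  also have "\<dots> = integral {-\<delta>/2..-\<delta>/2+\<delta>} (Dd \<delta>)"
    by (rule per_int[OF d Dd_integrable[OF d] per a, symmetric])
  also have "\<dots> = integral {-\<delta>/2..\<delta>/2} (Dd \<delta>)" by simp
  also have "\<dots> = integral {-\<delta>/2..\<delta>/2} (\<lambda>x. x)"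
  proof (rule integral_spike[where S="{\<delta>/2}"])
    show "x = Dd \<delta> x" if "x \<in> {-\<delta>/2..\<delta>/2} - {\<delta>/2}" for x
      using that Dd_small[OF d, of x] by auto
  qed auto
  also have "\<dots> = 0" using d by (simp add: integral_ident power2_eq_square)
  finally show ?thesis .
qed

fun kern :: "real \<Rightarrow> real \<Rightarrow> nat \<Rightarrow> real \<Rightarrow> real" where
  "kern a \<delta> 0 = Dd \<delta>"
| "kern a \<delta> (Suc k) = prim a \<delta> (kern a \<delta> k)"

lemma kern_props: assumes d: "\<delta> > 0" and a: "a \<le> -\<delta>/2"
  shows "(\<forall>b. kern a \<delta> k integrable_on {a..b}) \<and> (\<forall>s\<ge>a. kern a \<delta> k (s+\<delta>) = kern a \<delta> k s)
    \<and> (\<forall>s\<ge>a. \<bar>kern a \<delta> k s\<bar> \<le> 2^k*\<delta>^(k+1)) \<and> (\<forall>s\<ge>a. integral {s..s+\<delta>} (kern a \<delta> k) = 0)"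
proof (induction k)
  case 0
  have "\<bar>Dd \<delta> s\<bar> \<le> \<delta>" for s using Dd_bound[OF d, of s] d by simp
  then show ?case using Dd_integrable[OF d] Dd_periodic[OF d] Dd_mean[OF d a] by simp
next
  case (Suc k)
  have fi: "\<And>b. kern a \<delta> k integrable_on {a..b}" using Suc by blast
  note P = prim_props[OF d fi, of "2^k*\<delta>^(k+1)"]
  have "\<forall>b. kern a \<delta> (Suc k) integrable_on {a..b}"
    using P(1) Suc by (auto intro: integrable_continuous_real)
  moreover have "\<forall>s\<ge>a. \<bar>kern a \<delta> (Suc k) s\<bar> \<le> 2^(Suc k)*\<delta>^(Suc k+1)"
    using P(3) Suc by (simp add: algebra_simps)
  ultimately show ?case using P(2,4) Suc by simp
qed

lemma kern_cont: assumes d: "\<delta> > 0" and a: "a \<le> -\<delta>/2"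
  shows "continuous_on {a..b} (kern a \<delta> (Suc k))"
proof -
  have fi: "\<And>b. kern a \<delta> k integrable_on {a..b}" using kern_props[OF d a, of k] by blast
  show ?thesis using prim_props(1)[OF d fi, of "2^k*\<delta>^(k+1)"] kern_props[OF d a, of k] by simp
qed

lemma kern_deriv: assumes d: "\<delta> > 0" and a: "a \<le> -\<delta>/2" and s: "s > a"
  and nj: "k > 0 \<or> s/\<delta> + 1/2 \<notin> \<int>"
  shows "(kern a \<delta> (Suc k) has_real_derivative kern a \<delta> k s) (at s)"
proof -
  have ic: "isCont (kern a \<delta> k) s"
  proof (cases k)
    case 0 then show ?thesis using nj Dd_isCont[OF d] by simp
  next
    case (Suc j)
    have "continuous_on {a..s+1} (kern a \<delta> k)" using kern_cont[OF d a] Suc by simp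
    then show ?thesis by (rule continuous_on_interior) (use s in simp)
  qed
  have fi: "kern a \<delta> k integrable_on {a..s+1}" using kern_props[OF d a, of k] by blast
  have "((\<lambda>u. integral {a..u} (kern a \<delta> k)) has_vector_derivative kern a \<delta> k s) (at s within ({a..s+1} - {}))"
    by (rule integral_has_vector_derivative_continuous_at[OF fi])
       (use s ic in \<open>auto intro: continuous_at_imp_continuous_within\<close>)
  then have "((\<lambda>u. integral {a..u} (kern a \<delta> k)) has_real_derivative kern a \<delta> k s) (at s)"
    using at_within_Icc_at[of a s "s+1"] s by (simp add: has_real_derivative_iff_has_vector_derivative)
  then have "((\<lambda>u. integral {a..u} (kern a \<delta> k) - integral {a..a+\<delta>} (\<lambda>x. integral {a..x} (kern a \<delta> k)) / \<delta>)
     has_real_derivative kern a \<delta> k s - 0) (at s)"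
    by (intro derivative_intros)
  then show ?thesis by (simp add: prim_def)
qed



lemma ibp:
  fixes K L g g' :: "real \<Rightarrow> real"
  assumes r: "r > 0" and ab: "0 \<le> \<alpha>" "\<alpha> \<le> \<beta>" "\<beta> \<le> pi" and T: "finite T"
    and Lc: "continuous_on {-r..r} L"
    and LK: "\<And>s. s \<in> {-r..r} - T \<Longrightarrow> (L has_real_derivative K s) (at s)"
    and gd: "\<And>\<theta>. \<theta> \<in> {\<alpha>..\<beta>} \<Longrightarrow> (g has_real_derivative g' \<theta>) (at \<theta>)"
    and gc: "continuous_on {\<alpha>..\<beta>} g'"
  shows "((\<lambda>\<theta>. g \<theta> * sin \<theta> * K (r*cos \<theta>)) has_integral
          (g \<alpha> * L (r*cos \<alpha>) - g \<beta> * L (r*cos \<beta>) + integral {\<alpha>..\<beta>} (\<lambda>\<theta>. g' \<theta> * L (r*cos \<theta>))) / r) {\<alpha>..\<beta>}"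
proof -
  define S where "S = (\<lambda>\<theta>. r*cos \<theta>) -` T \<inter> {\<alpha>..\<beta>}"
  have inj: "inj_on (\<lambda>\<theta>. r*cos \<theta>) {\<alpha>..\<beta>}"
    by (rule inj_onI) (use r ab cos_inj_pi in auto)
  have S: "finite S" unfolding S_def by (rule finite_vimage_IntI[OF T inj])
  have rc: "r * cos \<theta> \<in> {-r..r}" for \<theta>
  proof -
    have "\<bar>r * cos \<theta>\<bar> \<le> r" using mult_left_mono[OF abs_cos_le_one[of \<theta>], of r] r by (simp add: abs_mult)
    then show ?thesis by (auto simp: abs_le_iff)
  qed
  have cL: "continuous_on {\<alpha>..\<beta>} (\<lambda>\<theta>. L (r*cos \<theta>))"
    by (rule continuous_on_compose2[OF Lc]) (use rc in \<open>auto intro!: continuous_intros\<close>)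
  have cg: "continuous_on {\<alpha>..\<beta>} g"
    by (rule DERIV_continuous_on) (use gd in \<open>auto intro: has_field_derivative_at_within\<close>)
  define \<phi>' where "\<phi>' \<theta> = g' \<theta> * L (r*cos \<theta>) - r * (g \<theta> * sin \<theta> * K (r*cos \<theta>))" for \<theta>
  have der: "((\<lambda>\<theta>. g \<theta> * L (r*cos \<theta>)) has_vector_derivative \<phi>' \<theta>) (at \<theta>)"
    if "\<theta> \<in> {\<alpha><..<\<beta>} - S" for \<theta>
  proof -
    have "r * cos \<theta> \<in> {-r..r} - T" using that rc unfolding S_def by auto
    then have d1: "(L has_real_derivative K (r*cos \<theta>)) (at (r*cos \<theta>))" by (rule LK)
    have d2: "((\<lambda>\<theta>. r*cos \<theta>) has_real_derivative (-(r* sin \<theta>))) (at \<theta>)"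
      by (auto intro!: derivative_eq_intros)
    have d3: "((\<lambda>\<theta>. L (r*cos \<theta>)) has_real_derivative K (r*cos \<theta>) * -(r* sin \<theta>)) (at \<theta>)"
      by (rule DERIV_chain2[OF d1 d2])
    have "((\<lambda>\<theta>. g \<theta> * L (r*cos \<theta>)) has_real_derivative
        g \<theta> * (K (r*cos \<theta>) * -(r* sin \<theta>)) + g' \<theta> * L (r*cos \<theta>)) (at \<theta>)"
      by (rule DERIV_mult'[OF gd d3]) (use that in auto)
    then have "((\<lambda>\<theta>. g \<theta> * L (r*cos \<theta>)) has_real_derivative \<phi>' \<theta>) (at \<theta>)"
      by (rule DERIV_cong) (simp add: \<phi>'_def algebra_simps)
    then show ?thesis by (simp add: has_real_derivative_iff_has_vector_derivative)
  qed
  have ftc: "(\<phi>' has_integral (g \<beta> * L (r*cos \<beta>) - g \<alpha> * L (r*cos \<alpha>))) {\<alpha>..\<beta>}"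
    by (rule fundamental_theorem_of_calculus_interior_strong[OF S ab(2) der])
       (auto intro!: continuous_intros cg cL)
  define I1 where "I1 = integral {\<alpha>..\<beta>} (\<lambda>\<theta>. g' \<theta> * L (r*cos \<theta>))"
  have i1: "((\<lambda>\<theta>. g' \<theta> * L (r*cos \<theta>)) has_integral I1) {\<alpha>..\<beta>}"
    unfolding I1_def by (intro integrable_integral integrable_continuous_real continuous_intros gc cL)
  have "((\<lambda>\<theta>. (-1/r) * (\<phi>' \<theta> - g' \<theta> * L (r*cos \<theta>))) has_integral
        (-1/r) * ((g \<beta> * L (r*cos \<beta>) - g \<alpha> * L (r*cos \<alpha>)) - I1)) {\<alpha>..\<beta>}"
    by (intro has_integral_mult_right has_integral_diff ftc i1)
  moreover have "(\<lambda>\<theta>. (-1/r) * (\<phi>' \<theta> - g' \<theta> * L (r*cos \<theta>))) = (\<lambda>\<theta>. g \<theta> * sin \<theta> * K (r*cos \<theta>))"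
    using r by (auto simp: \<phi>'_def field_simps)
  moreover have "(-1/r) * ((g \<beta> * L (r*cos \<beta>) - g \<alpha> * L (r*cos \<alpha>)) - I1)
     = (g \<alpha> * L (r*cos \<alpha>) - g \<beta> * L (r*cos \<beta>) + I1) / r"
    using r by (simp add: field_simps)
  ultimately show ?thesis unfolding I1_def by simp
qed



lemma sin_half: fixes x :: real assumes "0 \<le> x" "x \<le> 1" shows "x/2 \<le> sin x"
proof -
  have "\<bar>sin x - (\<Sum>m<3. sin_coeff m * x ^ m)\<bar> \<le> inverse (fact 3) * \<bar>x\<bar> ^ 3"
    by (rule Maclaurin_sin_bound)
  moreover have "(\<Sum>m<3. sin_coeff m * x ^ m) = x"
    by (simp add: eval_nat_numeral sin_coeff_def)
  moreover have "x^3 \<le> x" using mult_left_mono[OF mult_le_one[OF assms(2) assms(1) assms(2)] assms(1)] by (simp add: eval_nat_numeral)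
  ultimately have "\<bar>sin x - x\<bar> * 6 \<le> x" using assms by (simp add: eval_nat_numeral)
  then show ?thesis using assms by (simp add: abs_if split: if_splits)
qed

lemma rc_range: fixes r :: real assumes "r > 0" shows "r * cos \<theta> \<in> {-r..r}"
proof -
  have "\<bar>r * cos \<theta>\<bar> \<le> r" using mult_left_mono[OF abs_cos_le_one[of \<theta>], of r] assms by (simp add: abs_mult)
  then show ?thesis by (auto simp: abs_le_iff)
qed

lemma sqrt_est:
  fixes K L w w' :: "real \<Rightarrow> real"
  assumes r: "r>0" and e: "0 < \<epsilon>" "\<epsilon> \<le> 1" and T: "finite T"
    and Lc: "continuous_on {-r..r} L"
    and LK: "\<And>s. s \<in> {-r..r} - T \<Longrightarrow> (L has_real_derivative K s) (at s)"
    and KB: "\<And>s. s \<in> {-r..r} \<Longrightarrow> \<bar>K s\<bar> \<le> B" and LB: "\<And>s. s \<in> {-r..r} \<Longrightarrow> \<bar>L s\<bar> \<le> B'"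
    and wd: "\<And>\<theta>. (w has_real_derivative w' \<theta>) (at \<theta>)" and w'c: "continuous_on UNIV w'"
    and wb: "\<And>\<theta>. \<bar>w \<theta>\<bar> \<le> 1" and w'b: "\<And>\<theta>. \<bar>w' \<theta>\<bar> \<le> 1"
    and wi: "(\<lambda>\<theta>. w \<theta> * K (r*cos \<theta>)) integrable_on {0..pi}"
  shows "\<bar>integral {0..pi} (\<lambda>\<theta>. w \<theta> * K (r*cos \<theta>))\<bar> \<le> 2*\<epsilon>*B + 12*B'/(r*\<epsilon>)"
proof -
  define f where "f \<theta> = w \<theta> * K (r*cos \<theta>)" for \<theta>
  have B0: "0 \<le> B" using KB[of r] r by auto
  have B'0: "0 \<le> B'" using LB[of r] r by auto
  have pi2: "\<epsilon> < pi/2" using e pi_gt3 by linarith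
  have fb: "\<bar>f \<theta>\<bar> \<le> B" for \<theta>
  proof -
    have "\<bar>f \<theta>\<bar> = \<bar>w \<theta>\<bar> * \<bar>K (r*cos \<theta>)\<bar>" unfolding f_def by (simp add: abs_mult)
    also have "\<dots> \<le> 1 * B" by (rule mult_mono) (use wb KB rc_range[OF r] in auto)
    finally show ?thesis by simp
  qed
  have fi: "f integrable_on {x..y}" if "0 \<le> x" "y \<le> pi" for x y
  proof (cases "x \<le> y")
    case True then show ?thesis
      using integrable_subinterval_real[OF wi[folded f_def], of x y] that by auto
  next
    case False then show ?thesis by (simp add: integrable_on_empty)
  qed
  have split: "integral {0..pi} f = integral {0..\<epsilon>} f + integral {\<epsilon>..pi-\<epsilon>} f + integral {pi-\<epsilon>..pi} f"
  proof -
    have "integral {0..pi} f = integral {0..\<epsilon>} f + integral {\<epsilon>..pi} f"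
      using Henstock_Kurzweil_Integration.integral_combine[where a=0 and c=\<epsilon> and b=pi and f=f] fi[of 0 pi] e pi2 by simp
    moreover have "integral {\<epsilon>..pi} f = integral {\<epsilon>..pi-\<epsilon>} f + integral {pi-\<epsilon>..pi} f"
      using Henstock_Kurzweil_Integration.integral_combine[where a=\<epsilon> and c="pi-\<epsilon>" and b=pi and f=f] fi[of \<epsilon> pi] e pi2 by simp
    ultimately show ?thesis by simp
  qed
  have end1: "\<bar>integral {0..\<epsilon>} f\<bar> \<le> B*\<epsilon>"
    using int_bound[OF fi[of 0 \<epsilon>], of B] fb e pi2 by simp
  have end2: "\<bar>integral {pi-\<epsilon>..pi} f\<bar> \<le> B*\<epsilon>"
    using int_bound[OF fi[of "pi-\<epsilon>" pi], of B] fb e pi2 by simp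
  have sinpos: "sin \<theta> > 0" if "\<theta> \<in> {\<epsilon>..pi-\<epsilon>}" for \<theta>
    using that e by (intro sin_gt_zero) auto
  define g where "g \<theta> = w \<theta> / sin \<theta>" for \<theta>
  define g' where "g' \<theta> = (w' \<theta> * sin \<theta> - w \<theta> * cos \<theta>) / (sin \<theta> * sin \<theta>)" for \<theta>
  have wc: "continuous_on UNIV w"
    by (rule DERIV_continuous_on) (use wd in \<open>auto intro: has_field_derivative_at_within\<close>)
  have gd: "(g has_real_derivative g' \<theta>) (at \<theta>)" if "\<theta> \<in> {\<epsilon>..pi-\<epsilon>}" for \<theta>
    unfolding g_def[abs_def] g'_def
    by (rule DERIV_divide[OF wd DERIV_sin]) (use sinpos[OF that] in auto)
  have g'c: "continuous_on {\<epsilon>..pi-\<epsilon>} g'"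
    unfolding g'_def[abs_def]
    by (intro continuous_intros continuous_on_subset[OF wc] continuous_on_subset[OF w'c])
       (use sinpos in \<open>fastforce+\<close>)
  have ib: "((\<lambda>\<theta>. g \<theta> * sin \<theta> * K (r*cos \<theta>)) has_integral
          (g \<epsilon> * L (r*cos \<epsilon>) - g (pi-\<epsilon>) * L (r*cos (pi-\<epsilon>)) + integral {\<epsilon>..pi-\<epsilon>} (\<lambda>\<theta>. g' \<theta> * L (r*cos \<theta>))) / r) {\<epsilon>..pi-\<epsilon>}"
    by (rule ibp[OF r _ _ _ T Lc LK gd g'c]) (use e pi2 in auto)
  have mid_eq: "integral {\<epsilon>..pi-\<epsilon>} f = (g \<epsilon> * L (r*cos \<epsilon>) - g (pi-\<epsilon>) * L (r*cos (pi-\<epsilon>)) + integral {\<epsilon>..pi-\<epsilon>} (\<lambda>\<theta>. g' \<theta> * L (r*cos \<theta>))) / r"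
  proof -
    have "integral {\<epsilon>..pi-\<epsilon>} f = integral {\<epsilon>..pi-\<epsilon>} (\<lambda>\<theta>. g \<theta> * sin \<theta> * K (r*cos \<theta>))"
      apply (rule integral_cong)
      subgoal for \<theta> using sinpos[of \<theta>] by (simp add: f_def g_def)
      done
    then show ?thesis using ib by (simp add: integral_unique)
  qed
  have se: "sin \<epsilon> > 0" using sinpos[of \<epsilon>] e pi2 by auto
  have bnd1: "\<bar>g \<epsilon> * L (r*cos \<epsilon>)\<bar> \<le> B'/sin \<epsilon>"
  proof -
    have "\<bar>w \<epsilon> * L (r*cos \<epsilon>)\<bar> \<le> 1 * B'"
      unfolding abs_mult by (rule mult_mono) (use wb LB rc_range[OF r] in auto)
    then show ?thesis using se unfolding g_def by (simp add: abs_mult abs_divide divide_right_mono)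
  qed
  have bnd2: "\<bar>g (pi-\<epsilon>) * L (r*cos (pi-\<epsilon>))\<bar> \<le> B'/sin \<epsilon>"
  proof -
    have "\<bar>w (pi-\<epsilon>) * L (r*cos (pi-\<epsilon>))\<bar> \<le> 1 * B'"
      unfolding abs_mult by (rule mult_mono) (use wb LB rc_range[OF r, of "pi-\<epsilon>"] in auto)
    then show ?thesis using se unfolding g_def by (simp add: abs_mult abs_divide divide_right_mono)
  qed
  define h where "h \<theta> = 2*B' / (sin \<theta> * sin \<theta>)" for \<theta>
  have hint: "(h has_integral (-2*B'*cot (pi-\<epsilon>)) - (-2*B'*cot \<epsilon>)) {\<epsilon>..pi-\<epsilon>}"
  proof (rule fundamental_theorem_of_calculus)
    show "\<epsilon> \<le> pi - \<epsilon>" using pi2 by simp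
    fix \<theta> assume th: "\<theta> \<in> {\<epsilon>..pi-\<epsilon>}"
    have "((\<lambda>\<theta>. -2*B'*cot \<theta>) has_real_derivative -2*B' * (-inverse ((sin \<theta>)\<^sup>2))) (at \<theta>)"
      by (intro DERIV_cmult DERIV_cot) (use sinpos[OF th] in auto)
    then have "((\<lambda>\<theta>. -2*B'*cot \<theta>) has_real_derivative h \<theta>) (at \<theta>)"
      by (rule DERIV_cong) (simp add: h_def power2_eq_square field_simps)
    then show "((\<lambda>\<theta>. -2*B'*cot \<theta>) has_vector_derivative h \<theta>) (at \<theta> within {\<epsilon>..pi-\<epsilon>})"
      by (simp add: has_real_derivative_iff_has_vector_derivative has_vector_derivative_at_within)
  qed
  have hval: "integral {\<epsilon>..pi-\<epsilon>} h = 4*B'*cos \<epsilon>/sin \<epsilon>"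
    using integral_unique[OF hint] by (simp add: cot_def)
  have gLb: "\<bar>integral {\<epsilon>..pi-\<epsilon>} (\<lambda>\<theta>. g' \<theta> * L (r*cos \<theta>))\<bar> \<le> integral {\<epsilon>..pi-\<epsilon>} h"
  proof -
    have "norm (integral {\<epsilon>..pi-\<epsilon>} (\<lambda>\<theta>. g' \<theta> * L (r*cos \<theta>))) \<le> integral {\<epsilon>..pi-\<epsilon>} h"
    proof (rule integral_norm_bound_integral)
      have cL: "continuous_on {\<epsilon>..pi-\<epsilon>} (\<lambda>\<theta>. L (r*cos \<theta>))"
        by (rule continuous_on_compose2[OF Lc]) (use rc_range[OF r] in \<open>auto intro!: continuous_intros\<close>)
      show "(\<lambda>\<theta>. g' \<theta> * L (r*cos \<theta>)) integrable_on {\<epsilon>..pi-\<epsilon>}"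
        by (intro integrable_continuous_real continuous_intros g'c cL)
      show "h integrable_on {\<epsilon>..pi-\<epsilon>}" using hint by blast
      fix \<theta> assume th: "\<theta> \<in> {\<epsilon>..pi-\<epsilon>}"
      have sp: "sin \<theta> > 0" by (rule sinpos[OF th])
      have num: "\<bar>w' \<theta> * sin \<theta> - w \<theta> * cos \<theta>\<bar> \<le> 2"
      proof -
        have "\<bar>w' \<theta> * sin \<theta>\<bar> \<le> 1" using w'b[of \<theta>] abs_sin_le_one[of \<theta>]
          by (simp add: abs_mult mult_le_one)
        moreover have "\<bar>w \<theta> * cos \<theta>\<bar> \<le> 1" using wb[of \<theta>] abs_cos_le_one[of \<theta>]
          by (simp add: abs_mult mult_le_one)
        ultimately show ?thesis by linarith
      qed
      have "\<bar>g' \<theta> * L (r*cos \<theta>)\<bar> = \<bar>w' \<theta> * sin \<theta> - w \<theta> * cos \<theta>\<bar> * \<bar>L (r*cos \<theta>)\<bar> / (sin \<theta> * sin \<theta>)"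
        unfolding g'_def using sp by (simp add: abs_mult abs_divide)
      also have "\<dots> \<le> 2 * B' / (sin \<theta> * sin \<theta>)"
        by (intro divide_right_mono mult_mono num LB rc_range[OF r]) (use sp B'0 in auto)
      finally show "norm (g' \<theta> * L (r*cos \<theta>)) \<le> h \<theta>" unfolding h_def by simp
    qed
    then show ?thesis by simp
  qed
  have "4*B'*cos \<epsilon>/sin \<epsilon> \<le> 4*B'/sin \<epsilon>"
    using se B'0 by (intro divide_right_mono) (auto intro: mult_left_le)
  then have num6: "\<bar>g \<epsilon> * L (r*cos \<epsilon>) - g (pi-\<epsilon>) * L (r*cos (pi-\<epsilon>)) + integral {\<epsilon>..pi-\<epsilon>} (\<lambda>\<theta>. g' \<theta> * L (r*cos \<theta>))\<bar> \<le> 6*B'/sin \<epsilon>"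
  proof -
    have t: "\<bar>a - b + c\<bar> \<le> \<bar>a\<bar> + \<bar>b\<bar> + \<bar>c\<bar>" for a b c :: real by linarith
    have "B'/sin \<epsilon> + B'/sin \<epsilon> + 4*B'/sin \<epsilon> = 6*B'/sin \<epsilon>" by (simp add: field_simps)
    then show ?thesis using t[of "g \<epsilon> * L (r*cos \<epsilon>)" "g (pi-\<epsilon>) * L (r*cos (pi-\<epsilon>))"
        "integral {\<epsilon>..pi-\<epsilon>} (\<lambda>\<theta>. g' \<theta> * L (r*cos \<theta>))"] bnd1 bnd2 gLb hval \<open>4*B'*cos \<epsilon>/sin \<epsilon> \<le> 4*B'/sin \<epsilon>\<close>
      by linarith
  qed
  have mid: "\<bar>integral {\<epsilon>..pi-\<epsilon>} f\<bar> \<le> (6*B'/sin \<epsilon>) / r"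
    unfolding mid_eq using divide_right_mono[OF num6, of r] r by (simp add: abs_divide)
  have "sin \<epsilon> \<ge> \<epsilon>/2" by (rule sin_half) (use e in auto)
  then have "6*B'/sin \<epsilon> \<le> 6*B'/(\<epsilon>/2)"
    using e B'0 by (intro divide_left_mono) auto
  then have "(6*B'/sin \<epsilon>)/r \<le> 12*B'/(r*\<epsilon>)" using r e by (simp add: field_simps divide_right_mono)
  then have "\<bar>integral {\<epsilon>..pi-\<epsilon>} f\<bar> \<le> 12*B'/(r*\<epsilon>)" using mid by linarith
  moreover have "2*\<epsilon>*B = B*\<epsilon> + B*\<epsilon>" by simp
  ultimately show ?thesis unfolding f_def[symmetric] split using end1 end2 by linarith
qed



definition jumps :: "real \<Rightarrow> real \<Rightarrow> real set" where
  "jumps \<delta> r = {s \<in> {-r..r}. s/\<delta> + 1/2 \<in> \<int>}"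

lemma jumps_finite: assumes d: "\<delta> > 0" shows "finite (jumps \<delta> r)"
proof -
  have "jumps \<delta> r \<subseteq> (\<lambda>m::int. (of_int m - 1/2)*\<delta>) ` {\<lfloor>-r/\<delta>\<rfloor>..\<lceil>r/\<delta>\<rceil>+1}"
  proof
    fix s assume s: "s \<in> jumps \<delta> r"
    then obtain m :: int where m: "s/\<delta> + 1/2 = of_int m" unfolding jumps_def by (auto elim: Ints_cases)
    have sr: "-r \<le> s" "s \<le> r" using s unfolding jumps_def by auto
    have "s = (of_int m - 1/2)*\<delta>" using m d by (simp add: field_simps)
    moreover have "m \<le> \<lceil>r/\<delta>\<rceil>+1"
    proof -
      have "s/\<delta> \<le> r/\<delta>" using sr d by (simp add: divide_right_mono)
      then have "of_int m \<le> of_int \<lceil>r/\<delta>\<rceil> + (1::real)" using m le_of_int_ceiling[of "r/\<delta>"] by linarith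
      then show ?thesis by linarith
    qed
    moreover have "\<lfloor>-r/\<delta>\<rfloor> \<le> m"
    proof -
      have "-r/\<delta> \<le> s/\<delta>" using divide_right_mono[of "-r" s \<delta>] sr d by simp
      then have "of_int \<lfloor>-r/\<delta>\<rfloor> \<le> (of_int m :: real)" using m of_int_floor_le[of "-r/\<delta>"] by linarith
      then show ?thesis by linarith
    qed
    ultimately show "s \<in> (\<lambda>m::int. (of_int m - 1/2)*\<delta>) ` {\<lfloor>-r/\<delta>\<rfloor>..\<lceil>r/\<delta>\<rceil>+1}" by auto
  qed
  then show ?thesis by (rule finite_subset) simp
qed

lemma Dd_weight_int: assumes d: "\<delta> > 0" and w: "continuous_on {0..pi} w"
  shows "(\<lambda>\<theta>. w \<theta> * Dd \<delta> (r*cos \<theta>)) integrable_on {0..pi}"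
proof -
  have m: "(\<lambda>\<theta>. Dd \<delta> (r*cos \<theta>)) \<in> borel_measurable borel"
    by (rule measurable_compose[OF _ Dd_meas]) measurable
  have "(\<lambda>\<theta>. Dd \<delta> (r*cos \<theta>) * w \<theta>) absolutely_integrable_on {0..pi}"
  proof (rule absolutely_integrable_bounded_measurable_product_real)
    show "(\<lambda>\<theta>. Dd \<delta> (r*cos \<theta>)) \<in> borel_measurable (lebesgue_on {0..pi})"
      using m by (simp add: measurable_completion measurable_restrict_space1)
    show "bounded ((\<lambda>\<theta>. Dd \<delta> (r*cos \<theta>)) ` {0..pi})"
      using Dd_bound[OF d] by (auto simp: bounded_iff intro!: exI[of _ "\<delta>/2"])
    show "w absolutely_integrable_on {0..pi}" by (rule absolutely_integrable_continuous_real[OF w])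
  qed simp
  then have "(\<lambda>\<theta>. Dd \<delta> (r*cos \<theta>) * w \<theta>) integrable_on {0..pi}"
    by (rule set_lebesgue_integral_eq_integral(1))
  then show ?thesis by (simp add: mult.commute)
qed

abbreviation kk :: "real \<Rightarrow> real \<Rightarrow> nat \<Rightarrow> real \<Rightarrow> real" where
  "kk \<delta> r k \<equiv> kern (-r-\<delta>) \<delta> k"

lemma kk_facts:
  assumes d: "0 < \<delta>" and r: "\<delta> \<le> r"
  shows "continuous_on {-r..r} (kk \<delta> r (Suc k))"
    and "\<And>s. s \<in> {-r..r} - jumps \<delta> r \<Longrightarrow> (kk \<delta> r (Suc k) has_real_derivative kk \<delta> r k s) (at s)"
    and "\<And>s. s \<in> {-r..r} \<Longrightarrow> \<bar>kk \<delta> r k s\<bar> \<le> 2^k*\<delta>^(k+1)"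
    and "continuous_on {0..pi} w \<Longrightarrow> (\<lambda>\<theta>. w \<theta> * kk \<delta> r k (r*cos \<theta>)) integrable_on {0..pi}"
proof -
  have a: "-r-\<delta> \<le> -\<delta>/2" using d r by simp
  show "continuous_on {-r..r} (kk \<delta> r (Suc k))"
    by (rule continuous_on_subset[OF kern_cont[OF d a, of r]]) (use d in auto)
  show "(kk \<delta> r (Suc k) has_real_derivative kk \<delta> r k s) (at s)" if "s \<in> {-r..r} - jumps \<delta> r" for s
    by (rule kern_deriv[OF d a]) (use that d in \<open>auto simp: jumps_def\<close>)
  show "\<bar>kk \<delta> r k s\<bar> \<le> 2^k*\<delta>^(k+1)" if "s \<in> {-r..r}" for s
    using kern_props[OF d a, of k] that d by auto
  assume w: "continuous_on {0..pi} w"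
  show "(\<lambda>\<theta>. w \<theta> * kk \<delta> r k (r*cos \<theta>)) integrable_on {0..pi}"
  proof (cases k)
    case 0 then show ?thesis using Dd_weight_int[OF d w] by simp
  next
    case (Suc j)
    have "continuous_on {-r..r} (kk \<delta> r k)"
      using continuous_on_subset[OF kern_cont[OF d a, of r j]] Suc d by auto
    then have "continuous_on {0..pi} (\<lambda>\<theta>. kk \<delta> r k (r*cos \<theta>))"
      by (rule continuous_on_compose2) (use rc_range d r in \<open>auto intro!: continuous_intros\<close>)
    then show ?thesis by (intro integrable_continuous_real continuous_intros w)
  qed
qed



definition Mi :: "real \<Rightarrow> (real \<Rightarrow> real) \<Rightarrow> nat \<Rightarrow> real" where
  "Mi r K n = integral {0..pi} (\<lambda>\<theta>. cos \<theta> * sin \<theta> ^ n * K (r*cos \<theta>))"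
definition Ni :: "real \<Rightarrow> (real \<Rightarrow> real) \<Rightarrow> nat \<Rightarrow> real" where
  "Ni r K n = integral {0..pi} (\<lambda>\<theta>. sin \<theta> ^ n * K (r*cos \<theta>))"

lemma Lcont_comp: assumes d: "0 < \<delta>" and r: "\<delta> \<le> r"
  shows "continuous_on {0..pi} (\<lambda>\<theta>. kk \<delta> r (Suc k) (r*cos \<theta>))"
  by (rule continuous_on_compose2[OF kk_facts(1)[OF d r]]) (use rc_range d r in \<open>auto intro!: continuous_intros\<close>)

lemma recN: assumes d: "0 < \<delta>" and r: "\<delta> \<le> r"
  shows "Ni r (kk \<delta> r k) (Suc (Suc m)) = real (Suc m) * Mi r (kk \<delta> r (Suc k)) m / r"
proof -
  have r0: "r > 0" using d r by simp
  define g' where "g' \<theta> = real (Suc m) * sin \<theta> ^ m * cos \<theta>" for \<theta>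
  have gd: "((\<lambda>\<theta>. sin \<theta> ^ Suc m) has_real_derivative g' \<theta>) (at \<theta>)" for \<theta>
    unfolding g'_def by (rule DERIV_cong[OF DERIV_power_Suc[OF DERIV_sin]]) (simp add: algebra_simps)
  have gc: "continuous_on {0..pi} g'" unfolding g'_def[abs_def] by (intro continuous_intros)
  have ib: "((\<lambda>\<theta>. sin \<theta> ^ Suc m * sin \<theta> * kk \<delta> r k (r*cos \<theta>)) has_integral
     (integral {0..pi} (\<lambda>\<theta>. g' \<theta> * kk \<delta> r (Suc k) (r*cos \<theta>))) / r) {0..pi}"
    using ibp[where \<alpha>=0 and \<beta>=pi, OF r0 _ _ _ jumps_finite[OF d, of r] kk_facts(1)[OF d r] kk_facts(2)[OF d r] gd gc] by (simp del: kern.simps)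
  have "integral {0..pi} (\<lambda>\<theta>. g' \<theta> * kk \<delta> r (Suc k) (r*cos \<theta>))
      = integral {0..pi} (\<lambda>\<theta>. real (Suc m) * (cos \<theta> * sin \<theta> ^ m * kk \<delta> r (Suc k) (r*cos \<theta>)))"
    unfolding g'_def by (simp add: mult_ac)
  also have "\<dots> = real (Suc m) * Mi r (kk \<delta> r (Suc k)) m"
    unfolding Mi_def by (rule integral_mult_right)
  finally have e: "integral {0..pi} (\<lambda>\<theta>. g' \<theta> * kk \<delta> r (Suc k) (r*cos \<theta>)) = real (Suc m) * Mi r (kk \<delta> r (Suc k)) m" .
  have "(\<lambda>\<theta>. sin \<theta> ^ Suc m * sin \<theta> * kk \<delta> r k (r*cos \<theta>)) = (\<lambda>\<theta>. sin \<theta> ^ Suc (Suc m) * kk \<delta> r k (r*cos \<theta>))"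
    by (simp add: mult_ac)
  then show ?thesis using integral_unique[OF ib] e unfolding Ni_def by simp
qed

lemma recM: assumes d: "0 < \<delta>" and r: "\<delta> \<le> r"
  shows "Mi r (kk \<delta> r k) (Suc (Suc m)) =
     (real (Suc m) * Ni r (kk \<delta> r (Suc k)) m - real (Suc (Suc m)) * Ni r (kk \<delta> r (Suc k)) (Suc (Suc m))) / r"
proof -
  have r0: "r > 0" using d r by simp
  define g' where "g' \<theta> = real (Suc m) * sin \<theta> ^ m - real (Suc (Suc m)) * sin \<theta> ^ Suc (Suc m)" for \<theta>
  have gd: "((\<lambda>\<theta>. cos \<theta> * sin \<theta> ^ Suc m) has_real_derivative g' \<theta>) (at \<theta>)" for \<theta>
  proof -
    have p: "((\<lambda>\<theta>. sin \<theta> ^ Suc m) has_real_derivative real (Suc m) * sin \<theta> ^ m * cos \<theta>) (at \<theta>)"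
      by (rule DERIV_cong[OF DERIV_power_Suc[OF DERIV_sin]]) (simp add: algebra_simps)
    have "((\<lambda>\<theta>. cos \<theta> * sin \<theta> ^ Suc m) has_real_derivative
        (-sin \<theta>) * sin \<theta> ^ Suc m + cos \<theta> * (real (Suc m) * sin \<theta> ^ m * cos \<theta>)) (at \<theta>)"
      by (rule DERIV_cong[OF DERIV_mult[OF DERIV_cos p]]) simp
    moreover have "(-sin \<theta>) * sin \<theta> ^ Suc m + cos \<theta> * (real (Suc m) * sin \<theta> ^ m * cos \<theta>) = g' \<theta>"
    proof -
      have cc: "cos \<theta> * cos \<theta> = 1 - sin \<theta> * sin \<theta>" using sin_cos_squared_add3[of \<theta>] by linarith
      have "cos \<theta> * (real (Suc m) * sin \<theta> ^ m * cos \<theta>) = real (Suc m) * sin \<theta> ^ m * (cos \<theta> * cos \<theta>)"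
        by (simp add: mult_ac)
      also have "\<dots> = real (Suc m) * sin \<theta> ^ m - real (Suc m) * sin \<theta> ^ Suc (Suc m)"
        unfolding cc by (simp add: algebra_simps)
      finally show ?thesis unfolding g'_def by (simp add: algebra_simps)
    qed
    ultimately show ?thesis by simp
  qed
  have gc: "continuous_on {0..pi} g'" unfolding g'_def[abs_def] by (intro continuous_intros)
  have ib: "((\<lambda>\<theta>. cos \<theta> * sin \<theta> ^ Suc m * sin \<theta> * kk \<delta> r k (r*cos \<theta>)) has_integral
     (integral {0..pi} (\<lambda>\<theta>. g' \<theta> * kk \<delta> r (Suc k) (r*cos \<theta>))) / r) {0..pi}"
    using ibp[where \<alpha>=0 and \<beta>=pi, OF r0 _ _ _ jumps_finite[OF d, of r] kk_facts(1)[OF d r] kk_facts(2)[OF d r] gd gc] by (simp del: kern.simps)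
  have c1: "continuous_on {0..pi} (\<lambda>\<theta>. kk \<delta> r (Suc k) (r*cos \<theta>))" by (rule Lcont_comp[OF d r])
  have "integral {0..pi} (\<lambda>\<theta>. g' \<theta> * kk \<delta> r (Suc k) (r*cos \<theta>))
      = integral {0..pi} (\<lambda>\<theta>. real (Suc m) * (sin \<theta> ^ m * kk \<delta> r (Suc k) (r*cos \<theta>))
           - real (Suc (Suc m)) * (sin \<theta> ^ Suc (Suc m) * kk \<delta> r (Suc k) (r*cos \<theta>)))"
    unfolding g'_def by (simp add: algebra_simps)
  also have "\<dots> = integral {0..pi} (\<lambda>\<theta>. real (Suc m) * (sin \<theta> ^ m * kk \<delta> r (Suc k) (r*cos \<theta>)))
           - integral {0..pi} (\<lambda>\<theta>. real (Suc (Suc m)) * (sin \<theta> ^ Suc (Suc m) * kk \<delta> r (Suc k) (r*cos \<theta>)))"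
    by (rule integral_diff) (intro integrable_continuous_real continuous_intros c1)+
  also have "\<dots> = real (Suc m) * Ni r (kk \<delta> r (Suc k)) m - real (Suc (Suc m)) * Ni r (kk \<delta> r (Suc k)) (Suc (Suc m))"
    unfolding Ni_def by simp
  finally have e: "integral {0..pi} (\<lambda>\<theta>. g' \<theta> * kk \<delta> r (Suc k) (r*cos \<theta>)) = real (Suc m) * Ni r (kk \<delta> r (Suc k)) m - real (Suc (Suc m)) * Ni r (kk \<delta> r (Suc k)) (Suc (Suc m))" .
  have "(\<lambda>\<theta>. cos \<theta> * sin \<theta> ^ Suc m * sin \<theta> * kk \<delta> r k (r*cos \<theta>)) = (\<lambda>\<theta>. cos \<theta> * sin \<theta> ^ Suc (Suc m) * kk \<delta> r k (r*cos \<theta>))"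
    by (simp add: mult_ac)
  then show ?thesis using integral_unique[OF ib] e unfolding Mi_def by simp
qed



lemma eps_facts: fixes \<delta> r :: real assumes "0<\<delta>" "\<delta> \<le> r"
  shows "0 < sqrt(\<delta>/r)" "sqrt(\<delta>/r) \<le> 1" "\<delta>/r = sqrt(\<delta>/r)^2"
  using assms by (auto simp: divide_le_eq_1)

lemma pow_div: fixes \<delta> r \<epsilon> :: real assumes "\<delta>/r = \<epsilon>^2"
  shows "\<delta>^(Suc k + 1) / r = \<delta>^(k+1) * \<epsilon>^2"
proof -
  have "\<delta>^(Suc k + 1) / r = \<delta>^(k+1) * (\<delta>/r)" by (simp add: field_simps)
  then show ?thesis using assms by simp
qed

lemma base0: assumes d: "0 < \<delta>" and r: "\<delta> \<le> r"
  shows "\<bar>Ni r (kk \<delta> r k) 0\<bar> \<le> (26*2^k) * \<delta>^(k+1) * sqrt(\<delta>/r)^(0+1)"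
    and "\<bar>Mi r (kk \<delta> r k) 0\<bar> \<le> (26*2^k) * \<delta>^(k+1) * sqrt(\<delta>/r)^(0+1)"
proof -
  define \<epsilon> where "\<epsilon> = sqrt(\<delta>/r)"
  have e: "0 < \<epsilon>" "\<epsilon> \<le> 1" "\<delta>/r = \<epsilon>^2" using eps_facts[OF d r] unfolding \<epsilon>_def by auto
  have r0: "r > 0" using d r by simp
  have KB: "\<And>s. s \<in> {-r..r} \<Longrightarrow> \<bar>kk \<delta> r k s\<bar> \<le> 2^k*\<delta>^(k+1)" by (rule kk_facts(3)[OF d r])
  have LB: "\<And>s. s \<in> {-r..r} \<Longrightarrow> \<bar>kk \<delta> r (Suc k) s\<bar> \<le> 2^(Suc k)*\<delta>^(Suc k+1)" by (rule kk_facts(3)[OF d r])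
  have ar: "2*\<epsilon>*(2^k*\<delta>^(k+1)) + 12*(2^(Suc k)*\<delta>^(Suc k+1))/(r*\<epsilon>) = (26*2^k) * \<delta>^(k+1) * \<epsilon>"
  proof -
    have "12*(2^(Suc k)*\<delta>^(Suc k+1))/(r*\<epsilon>) = 24*2^k*(\<delta>^(Suc k+1)/r)/\<epsilon>"
      by (simp add: field_simps)
    also have "\<dots> = 24*2^k*\<delta>^(k+1)*\<epsilon>" unfolding pow_div[OF e(3)] using e by (simp add: power2_eq_square)
    finally show ?thesis by (simp add: algebra_simps)
  qed
  have i1: "(\<lambda>\<theta>. kk \<delta> r k (r*cos \<theta>)) integrable_on {0..pi}"
    using kk_facts(4)[OF d r, of "\<lambda>_. 1"] by simp
  have "\<bar>integral {0..pi} (\<lambda>\<theta>. 1 * kk \<delta> r k (r*cos \<theta>))\<bar> \<le> 2*\<epsilon>*(2^k*\<delta>^(k+1)) + 12*(2^(Suc k)*\<delta>^(Suc k+1))/(r*\<epsilon>)"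
    by (rule sqrt_est[OF r0 e(1,2) jumps_finite[OF d, of r] kk_facts(1)[OF d r] kk_facts(2)[OF d r] KB LB,
          where w'="\<lambda>_. 0"]) (auto intro!: continuous_intros simp: i1)
  then show "\<bar>Ni r (kk \<delta> r k) 0\<bar> \<le> (26*2^k) * \<delta>^(k+1) * sqrt(\<delta>/r)^(0+1)"
    unfolding Ni_def \<epsilon>_def[symmetric] ar by simp
  have "\<bar>integral {0..pi} (\<lambda>\<theta>. cos \<theta> * kk \<delta> r k (r*cos \<theta>))\<bar> \<le> 2*\<epsilon>*(2^k*\<delta>^(k+1)) + 12*(2^(Suc k)*\<delta>^(Suc k+1))/(r*\<epsilon>)"
    by (rule sqrt_est[OF r0 e(1,2) jumps_finite[OF d, of r] kk_facts(1)[OF d r] kk_facts(2)[OF d r] KB LB,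
          where w'="\<lambda>\<theta>. - sin \<theta>"]) (auto intro!: kk_facts(4)[OF d r] continuous_intros DERIV_cos)
  then show "\<bar>Mi r (kk \<delta> r k) 0\<bar> \<le> (26*2^k) * \<delta>^(k+1) * sqrt(\<delta>/r)^(0+1)"
    unfolding Mi_def \<epsilon>_def[symmetric] ar by simp
qed

lemma base1: assumes d: "0 < \<delta>" and r: "\<delta> \<le> r"
  shows "\<bar>Ni r (kk \<delta> r k) 1\<bar> \<le> (12*2^k) * \<delta>^(k+1) * sqrt(\<delta>/r)^(1+1)"
    and "\<bar>Mi r (kk \<delta> r k) 1\<bar> \<le> (12*2^k) * \<delta>^(k+1) * sqrt(\<delta>/r)^(1+1)"
proof -
  define \<epsilon> where "\<epsilon> = sqrt(\<delta>/r)"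
  have e: "0 < \<epsilon>" "\<epsilon> \<le> 1" "\<delta>/r = \<epsilon>^2" using eps_facts[OF d r] unfolding \<epsilon>_def by auto
  have r0: "r > 0" using d r by simp
  define B' where "B' = 2^(Suc k)*\<delta>^(Suc k+1)"
  have LB: "\<And>s. s \<in> {-r..r} \<Longrightarrow> \<bar>kk \<delta> r (Suc k) s\<bar> \<le> B'" unfolding B'_def by (rule kk_facts(3)[OF d r])
  have B'0: "0 \<le> B'" unfolding B'_def using d by simp
  have ar: "6*B'/r = (12*2^k) * \<delta>^(k+1) * \<epsilon>^2"
  proof -
    have "6*B'/r = 12*2^k*(\<delta>^(Suc k+1)/r)" unfolding B'_def by (simp add: field_simps)
    then show ?thesis unfolding pow_div[OF e(3)] by simp
  qed
  have Lr: "\<bar>kk \<delta> r (Suc k) r\<bar> \<le> B'" "\<bar>kk \<delta> r (Suc k) (-r)\<bar> \<le> B'" using LB r0 by auto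
  have ib: "((\<lambda>\<theta>. 1 * sin \<theta> * kk \<delta> r k (r*cos \<theta>)) has_integral
      (1 * kk \<delta> r (Suc k) (r*cos 0) - 1 * kk \<delta> r (Suc k) (r*cos pi) + integral {0..pi} (\<lambda>\<theta>. 0 * kk \<delta> r (Suc k) (r*cos \<theta>))) / r) {0..pi}"
    by (rule ibp[OF r0 _ _ _ jumps_finite[OF d, of r] kk_facts(1)[OF d r] kk_facts(2)[OF d r]]) auto
  then have "Ni r (kk \<delta> r k) 1 = (kk \<delta> r (Suc k) r - kk \<delta> r (Suc k) (-r)) / r"
    unfolding Ni_def using integral_unique by (simp del: kern.simps)
  then have "\<bar>Ni r (kk \<delta> r k) 1\<bar> \<le> (2*B')/r" using Lr r0
    by (simp add: abs_divide divide_right_mono del: kern.simps)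
  also have "\<dots> \<le> 6*B'/r" using B'0 r0 by (simp add: divide_right_mono)
  finally show "\<bar>Ni r (kk \<delta> r k) 1\<bar> \<le> (12*2^k) * \<delta>^(k+1) * sqrt(\<delta>/r)^(1+1)"
    unfolding \<epsilon>_def[symmetric] ar by (simp add: power2_eq_square)
  have ib2: "((\<lambda>\<theta>. cos \<theta> * sin \<theta> * kk \<delta> r k (r*cos \<theta>)) has_integral
      (cos 0 * kk \<delta> r (Suc k) (r*cos 0) - cos pi * kk \<delta> r (Suc k) (r*cos pi) + integral {0..pi} (\<lambda>\<theta>. - sin \<theta> * kk \<delta> r (Suc k) (r*cos \<theta>))) / r) {0..pi}"
    by (rule ibp[OF r0 _ _ _ jumps_finite[OF d, of r] kk_facts(1)[OF d r] kk_facts(2)[OF d r]])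
       (auto intro!: DERIV_cos continuous_intros)
  have sI: "\<bar>integral {0..pi} (\<lambda>\<theta>. - sin \<theta> * kk \<delta> r (Suc k) (r*cos \<theta>))\<bar> \<le> B' * (pi - 0)"
  proof (rule int_bound)
    show "(\<lambda>\<theta>. - sin \<theta> * kk \<delta> r (Suc k) (r*cos \<theta>)) integrable_on {0..pi}"
      by (intro integrable_continuous_real continuous_intros Lcont_comp[OF d r])
    fix \<theta> show "\<bar>- sin \<theta> * kk \<delta> r (Suc k) (r*cos \<theta>)\<bar> \<le> B'"
      using mult_mono[OF abs_sin_le_one[of \<theta>] LB[OF rc_range[OF r0]]] B'0 by (simp add: abs_mult)
  qed simp
  have "Mi r (kk \<delta> r k) 1 = (kk \<delta> r (Suc k) r + kk \<delta> r (Suc k) (-r) + integral {0..pi} (\<lambda>\<theta>. - sin \<theta> * kk \<delta> r (Suc k) (r*cos \<theta>))) / r"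
    using integral_unique[OF ib2] unfolding Mi_def by (simp del: kern.simps)
  moreover have "\<bar>kk \<delta> r (Suc k) r + kk \<delta> r (Suc k) (-r) + integral {0..pi} (\<lambda>\<theta>. - sin \<theta> * kk \<delta> r (Suc k) (r*cos \<theta>))\<bar> \<le> 6*B'"
  proof -
    have t: "\<bar>a + b + c\<bar> \<le> \<bar>a\<bar> + \<bar>b\<bar> + \<bar>c\<bar>" for a b c :: real by linarith
    have "B' * (pi - 0) \<le> B' * 4" using pi_less_4 B'0 by (intro mult_left_mono) auto
    then show ?thesis using t[of "kk \<delta> r (Suc k) r" "kk \<delta> r (Suc k) (-r)"
       "integral {0..pi} (\<lambda>\<theta>. - sin \<theta> * kk \<delta> r (Suc k) (r*cos \<theta>))"] Lr sI by linarith
  qed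
  ultimately have "\<bar>Mi r (kk \<delta> r k) 1\<bar> \<le> 6*B'/r" using r0
    by (simp add: abs_divide divide_right_mono del: kern.simps)
  then show "\<bar>Mi r (kk \<delta> r k) 1\<bar> \<le> (12*2^k) * \<delta>^(k+1) * sqrt(\<delta>/r)^(1+1)"
    unfolding \<epsilon>_def[symmetric] ar by (simp add: power2_eq_square)
qed



lemma stepN: assumes d: "0 < \<delta>" and r: "\<delta> \<le> r"
  and hM: "\<bar>Mi r (kk \<delta> r (Suc k)) m\<bar> \<le> C * \<delta>^(Suc k+1) * sqrt(\<delta>/r)^(m+1)"
  shows "\<bar>Ni r (kk \<delta> r k) (Suc (Suc m))\<bar> \<le> (real (Suc m) * C) * \<delta>^(k+1) * sqrt(\<delta>/r)^(Suc (Suc m)+1)"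
proof -
  define \<epsilon> where "\<epsilon> = sqrt(\<delta>/r)"
  have e: "0 < \<epsilon>" "\<epsilon> \<le> 1" "\<delta>/r = \<epsilon>^2" using eps_facts[OF d r] unfolding \<epsilon>_def by auto
  have r0: "r > 0" using d r by simp
  have hM': "\<bar>Mi r (kk \<delta> r (Suc k)) m\<bar> \<le> C * \<delta>^(Suc k+1) * \<epsilon>^(m+1)" using hM unfolding \<epsilon>_def .
  have "\<bar>Ni r (kk \<delta> r k) (Suc (Suc m))\<bar> = real (Suc m) * \<bar>Mi r (kk \<delta> r (Suc k)) m\<bar> / r"
    using recN[OF d r] r0 by (simp add: abs_divide abs_mult del: kern.simps of_nat_Suc)
  also have "\<dots> \<le> real (Suc m) * (C * \<delta>^(Suc k+1) * \<epsilon>^(m+1)) / r"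
    by (intro divide_right_mono mult_left_mono hM') (use r0 in auto)
  also have "\<dots> = real (Suc m) * C * (\<delta>^(Suc k+1) / r) * \<epsilon>^(m+1)" by simp
  also have "\<dots> = (real (Suc m) * C) * \<delta>^(k+1) * (\<epsilon>^2 * \<epsilon>^(m+1))"
    unfolding pow_div[OF e(3)] by simp
  also have "\<epsilon>^2 * \<epsilon>^(m+1) = \<epsilon>^(Suc (Suc m)+1)" by (simp add: power2_eq_square)
  finally show ?thesis unfolding \<epsilon>_def .
qed

lemma stepM: assumes d: "0 < \<delta>" and r: "\<delta> \<le> r"
  and h1: "\<bar>Ni r (kk \<delta> r (Suc k)) m\<bar> \<le> C1 * \<delta>^(Suc k+1) * sqrt(\<delta>/r)^(m+1)"
  and h2: "\<bar>Ni r (kk \<delta> r (Suc k)) (Suc (Suc m))\<bar> \<le> C2 * \<delta>^(Suc k+1) * sqrt(\<delta>/r)^(Suc (Suc m)+1)"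
  and C2: "C2 \<ge> 0"
  shows "\<bar>Mi r (kk \<delta> r k) (Suc (Suc m))\<bar> \<le> (real (Suc m) * C1 + real (Suc (Suc m)) * C2) * \<delta>^(k+1) * sqrt(\<delta>/r)^(Suc (Suc m)+1)"
proof -
  define \<epsilon> where "\<epsilon> = sqrt(\<delta>/r)"
  have e: "0 < \<epsilon>" "\<epsilon> \<le> 1" "\<delta>/r = \<epsilon>^2" using eps_facts[OF d r] unfolding \<epsilon>_def by auto
  have r0: "r > 0" using d r by simp
  define D where "D = \<delta>^(Suc k+1)"
  define N1 where "N1 = Ni r (kk \<delta> r (Suc k)) m"
  define N2 where "N2 = Ni r (kk \<delta> r (Suc k)) (Suc (Suc m))"
  have h1': "\<bar>N1\<bar> \<le> C1 * D * \<epsilon>^(m+1)" using h1 unfolding \<epsilon>_def N1_def D_def .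
  have h2': "\<bar>N2\<bar> \<le> C2 * D * \<epsilon>^(m+3)" using h2 unfolding \<epsilon>_def N2_def D_def by (simp add: numeral_3_eq_3)
  have t: "\<bar>a * x - b * y\<bar> \<le> a * \<bar>x\<bar> + b * \<bar>y\<bar>" if "a \<ge> 0" "b \<ge> 0" for a b x y :: real
    using that by (simp add: abs_mult abs_triangle_ineq4 order_trans[OF abs_triangle_ineq4])
  have "\<bar>Mi r (kk \<delta> r k) (Suc (Suc m))\<bar> = \<bar>real (Suc m) * N1 - real (Suc (Suc m)) * N2\<bar> / r"
    using recM[OF d r] r0 unfolding N1_def N2_def by (simp add: abs_divide del: kern.simps of_nat_Suc)
  also have "\<dots> \<le> (real (Suc m) * \<bar>N1\<bar> + real (Suc (Suc m)) * \<bar>N2\<bar>) / r"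
    by (intro divide_right_mono t) (use r0 in auto)
  also have "\<dots> \<le> (real (Suc m) * (C1 * D * \<epsilon>^(m+1)) + real (Suc (Suc m)) * (C2 * D * \<epsilon>^(m+3))) / r"
    by (intro divide_right_mono add_mono mult_left_mono h1' h2') (use r0 in auto)
  also have "\<dots> = (D/r) * (real (Suc m) * C1 * \<epsilon>^(m+1) + real (Suc (Suc m)) * C2 * \<epsilon>^(m+3))"
    by (simp add: field_simps)
  also have "\<dots> = \<delta>^(k+1) * (real (Suc m) * C1 * (\<epsilon>^2 * \<epsilon>^(m+1)) + real (Suc (Suc m)) * C2 * (\<epsilon>^2 * \<epsilon>^(m+3)))"
    unfolding D_def pow_div[OF e(3)] by (simp add: algebra_simps)
  also have "\<epsilon>^2 * \<epsilon>^(m+1) = \<epsilon>^(m+3)" by (simp add: power2_eq_square numeral_3_eq_3)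
  also have "\<epsilon>^2 * \<epsilon>^(m+3) = \<epsilon>^(m+5)" by (simp add: power2_eq_square eval_nat_numeral)
  also have "\<delta>^(k+1) * (real (Suc m) * C1 * \<epsilon>^(m+3) + real (Suc (Suc m)) * C2 * \<epsilon>^(m+5))
      \<le> \<delta>^(k+1) * (real (Suc m) * C1 * \<epsilon>^(m+3) + real (Suc (Suc m)) * C2 * \<epsilon>^(m+3))"
  proof -
    have "\<epsilon>^(m+5) \<le> \<epsilon>^(m+3)" by (rule power_decreasing) (use e in auto)
    then have "real (Suc (Suc m)) * C2 * \<epsilon>^(m+5) \<le> real (Suc (Suc m)) * C2 * \<epsilon>^(m+3)"
      using C2 by (intro mult_left_mono) auto
    then show ?thesis using d by (intro mult_left_mono) auto
  qed
  also have "\<dots> = (real (Suc m) * C1 + real (Suc (Suc m)) * C2) * \<delta>^(k+1) * \<epsilon>^(Suc (Suc m)+1)"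
    by (simp add: algebra_simps numeral_3_eq_3)
  finally show ?thesis unfolding \<epsilon>_def .
qed

lemma main_ind: "\<forall>k. (\<exists>C\<ge>0. \<forall>\<delta> r. 0<\<delta> \<longrightarrow> \<delta>\<le>r \<longrightarrow> \<bar>Mi r (kk \<delta> r k) n\<bar> \<le> C*\<delta>^(k+1)* sqrt(\<delta>/r)^(n+1))
   \<and> (\<exists>C\<ge>0. \<forall>\<delta> r. 0<\<delta> \<longrightarrow> \<delta>\<le>r \<longrightarrow> \<bar>Ni r (kk \<delta> r k) n\<bar> \<le> C*\<delta>^(k+1)* sqrt(\<delta>/r)^(n+1))"
proof (induction n rule: less_induct)
  case (less n)
  consider "n = 0" | "n = 1" | m where "n = Suc (Suc m)" by (metis One_nat_def not0_implies_Suc)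
  then show ?case
  proof cases
    case 1
    show ?thesis
    proof (intro allI conjI)
      fix k
      show "\<exists>C\<ge>0. \<forall>\<delta> r. 0<\<delta> \<longrightarrow> \<delta>\<le>r \<longrightarrow> \<bar>Mi r (kk \<delta> r k) n\<bar> \<le> C*\<delta>^(k+1)* sqrt(\<delta>/r)^(n+1)"
        by (rule exI[of _ "26*2^k"]) (use base0(2) 1 in \<open>simp del: kern.simps\<close>)
      show "\<exists>C\<ge>0. \<forall>\<delta> r. 0<\<delta> \<longrightarrow> \<delta>\<le>r \<longrightarrow> \<bar>Ni r (kk \<delta> r k) n\<bar> \<le> C*\<delta>^(k+1)* sqrt(\<delta>/r)^(n+1)"
        by (rule exI[of _ "26*2^k"]) (use base0(1) 1 in \<open>simp del: kern.simps\<close>)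
    qed
  next
    case 2
    show ?thesis
    proof (intro allI conjI)
      fix k
      show "\<exists>C\<ge>0. \<forall>\<delta> r. 0<\<delta> \<longrightarrow> \<delta>\<le>r \<longrightarrow> \<bar>Mi r (kk \<delta> r k) n\<bar> \<le> C*\<delta>^(k+1)* sqrt(\<delta>/r)^(n+1)"
        by (rule exI[of _ "12*2^k"]) (use base1(2) 2 in \<open>simp del: kern.simps\<close>)
      show "\<exists>C\<ge>0. \<forall>\<delta> r. 0<\<delta> \<longrightarrow> \<delta>\<le>r \<longrightarrow> \<bar>Ni r (kk \<delta> r k) n\<bar> \<le> C*\<delta>^(k+1)* sqrt(\<delta>/r)^(n+1)"
        by (rule exI[of _ "12*2^k"]) (use base1(1) 2 in \<open>simp del: kern.simps\<close>)
    qed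
  next
    case 3
    have IH: "\<forall>k. (\<exists>C\<ge>0. \<forall>\<delta> r. 0<\<delta> \<longrightarrow> \<delta>\<le>r \<longrightarrow> \<bar>Mi r (kk \<delta> r k) m\<bar> \<le> C*\<delta>^(k+1)* sqrt(\<delta>/r)^(m+1))
      \<and> (\<exists>C\<ge>0. \<forall>\<delta> r. 0<\<delta> \<longrightarrow> \<delta>\<le>r \<longrightarrow> \<bar>Ni r (kk \<delta> r k) m\<bar> \<le> C*\<delta>^(k+1)* sqrt(\<delta>/r)^(m+1))"
      by (rule less.IH) (use 3 in simp)
    have NN: "\<exists>C\<ge>0. \<forall>\<delta> r. 0<\<delta> \<longrightarrow> \<delta>\<le>r \<longrightarrow> \<bar>Ni r (kk \<delta> r k) n\<bar> \<le> C*\<delta>^(k+1)* sqrt(\<delta>/r)^(n+1)" for k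
    proof -
      obtain C where C: "C \<ge> 0" "\<forall>\<delta> r. 0<\<delta> \<longrightarrow> \<delta>\<le>r \<longrightarrow> \<bar>Mi r (kk \<delta> r (Suc k)) m\<bar> \<le> C*\<delta>^(Suc k+1)* sqrt(\<delta>/r)^(m+1)"
        using IH by blast
      show ?thesis
        by (rule exI[of _ "real (Suc m) * C"]) (use C stepN 3 in \<open>simp del: kern.simps\<close>)
    qed
    show ?thesis
    proof (intro allI conjI)
      fix k
      show "\<exists>C\<ge>0. \<forall>\<delta> r. 0<\<delta> \<longrightarrow> \<delta>\<le>r \<longrightarrow> \<bar>Ni r (kk \<delta> r k) n\<bar> \<le> C*\<delta>^(k+1)* sqrt(\<delta>/r)^(n+1)"
        by (rule NN)
      obtain C1 where C1: "C1 \<ge> 0" "\<forall>\<delta> r. 0<\<delta> \<longrightarrow> \<delta>\<le>r \<longrightarrow> \<bar>Ni r (kk \<delta> r (Suc k)) m\<bar> \<le> C1*\<delta>^(Suc k+1)* sqrt(\<delta>/r)^(m+1)"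
        using IH by blast
      obtain C2 where C2: "C2 \<ge> 0" "\<forall>\<delta> r. 0<\<delta> \<longrightarrow> \<delta>\<le>r \<longrightarrow> \<bar>Ni r (kk \<delta> r (Suc k)) n\<bar> \<le> C2*\<delta>^(Suc k+1)* sqrt(\<delta>/r)^(n+1)"
        using NN by blast
      show "\<exists>C\<ge>0. \<forall>\<delta> r. 0<\<delta> \<longrightarrow> \<delta>\<le>r \<longrightarrow> \<bar>Mi r (kk \<delta> r k) n\<bar> \<le> C*\<delta>^(k+1)* sqrt(\<delta>/r)^(n+1)"
      proof (rule exI[of _ "real (Suc m) * C1 + real (Suc (Suc m)) * C2"], intro conjI allI impI)
        show "0 \<le> real (Suc m) * C1 + real (Suc (Suc m)) * C2" using C1 C2 by simp
        fix \<delta> r :: real assume d: "0 < \<delta>" and r: "\<delta> \<le> r"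
        show "\<bar>Mi r (kk \<delta> r k) n\<bar> \<le> (real (Suc m) * C1 + real (Suc (Suc m)) * C2)*\<delta>^(k+1)* sqrt(\<delta>/r)^(n+1)"
          unfolding 3 by (rule stepM[OF d r _ _ C2(1)]) (use C1(2) C2(2) d r 3 in auto)
      qed
    qed
  qed
qed



theorem lemma6p1:
  fixes d :: nat
  assumes "d \<ge> 2"
  shows "\<exists>C. \<forall>r \<delta>. r > 0 \<longrightarrow> \<delta> > 0 \<longrightarrow>
     \<bar>integral {0..pi} (\<lambda>\<theta>. Dd \<delta> (r * cos \<theta>) * cos \<theta> * (sin \<theta>) ^ (d - 2))\<bar>
       \<le> C * \<delta> powr ((real d + 1) / 2) / r powr ((real d - 1) / 2)"
proof -
  obtain C where C0: "C \<ge> 0" and hC: "\<forall>\<delta> r. 0<\<delta> \<longrightarrow> \<delta>\<le>r \<longrightarrow> \<bar>Mi r (kk \<delta> r 0) (d-2)\<bar> \<le> C*\<delta>^(0+1)* sqrt(\<delta>/r)^(d-2+1)"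
    using main_ind[of "d-2"] by blast
  show ?thesis
  proof (rule exI[of _ "max C 2"], intro allI impI)
    fix r \<delta> :: real assume r: "r > 0" and d: "\<delta> > 0"
    define I where "I = integral {0..pi} (\<lambda>\<theta>. Dd \<delta> (r * cos \<theta>) * cos \<theta> * sin \<theta> ^ (d - 2))"
    have IM: "I = Mi r (kk \<delta> r 0) (d-2)" unfolding I_def Mi_def by (simp add: mult_ac)
    define P where "P = (\<delta>/r) powr ((real d - 1)/2)"
    have R: "\<delta> powr ((real d + 1)/2) / r powr ((real d - 1)/2) = \<delta> * P"
    proof -
      have "(real d + 1)/2 = 1 + (real d - 1)/2" by (simp add: field_simps)
      then have "\<delta> powr ((real d + 1)/2) = \<delta> powr (1 + (real d - 1)/2)" by (rule arg_cong)
      also have "\<dots> = \<delta> * \<delta> powr ((real d - 1)/2)"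
        unfolding powr_add using d by simp
      finally have "\<delta> powr ((real d + 1)/2) = \<delta> * \<delta> powr ((real d - 1)/2)" .
      then show ?thesis unfolding P_def by (simp add: powr_divide)
    qed
    have P0: "P \<ge> 0" unfolding P_def by simp
    have goal: "\<bar>I\<bar> \<le> max C 2 * (\<delta> * P)"
    proof (cases "\<delta> \<le> r")
      case True
      have "sqrt(\<delta>/r)^(d-2+1) = P"
      proof -
        have "sqrt(\<delta>/r) = (\<delta>/r) powr (1/2)" using d r by (simp add: powr_half_sqrt)
        then have "sqrt(\<delta>/r)^(d-2+1) = ((\<delta>/r) powr (1/2))^(d-2+1)" by (simp only:)
        also have "\<dots> = (\<delta>/r) powr (real (d-2+1) * (1/2))"
          by (rule powr_power) (use d r in simp)
        finally have "sqrt(\<delta>/r)^(d-2+1) = (\<delta>/r) powr (real (d-2+1) * (1/2))" .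
        moreover have "real (d-2+1) * (1/2) = (real d - 1)/2" using assms by (simp add: of_nat_diff)
        ultimately show ?thesis unfolding P_def by simp
      qed
      then have "\<bar>I\<bar> \<le> C * (\<delta> * P)" using hC[rule_format, OF d True] IM by simp
      also have "\<dots> \<le> max C 2 * (\<delta> * P)" using d P0 by (intro mult_right_mono) auto
      finally show ?thesis .
    next
      case False
      have w: "continuous_on {0..pi} (\<lambda>\<theta>. cos \<theta> * sin \<theta> ^ (d - 2))" by (intro continuous_intros)
      have int: "(\<lambda>\<theta>. Dd \<delta> (r * cos \<theta>) * cos \<theta> * sin \<theta> ^ (d - 2)) integrable_on {0..pi}"
        using Dd_weight_int[OF d w, of r] by (simp add: mult_ac)
      have "\<bar>I\<bar> \<le> \<delta>/2 * (pi - 0)" unfolding I_def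
      proof (rule int_bound[OF int])
        fix \<theta>
        have "\<bar>Dd \<delta> (r * cos \<theta>) * cos \<theta> * sin \<theta> ^ (d - 2)\<bar> = \<bar>Dd \<delta> (r * cos \<theta>)\<bar> * (\<bar>cos \<theta>\<bar> * \<bar>sin \<theta>\<bar> ^ (d - 2))"
          by (simp add: abs_mult power_abs)
        also have "\<dots> \<le> \<delta>/2 * 1"
          by (intro mult_mono Dd_bound[OF d] mult_le_one power_le_one) (use d in auto)
        finally show "\<bar>Dd \<delta> (r * cos \<theta>) * cos \<theta> * sin \<theta> ^ (d - 2)\<bar> \<le> \<delta>/2" by simp
      qed simp
      also have "\<dots> \<le> 2 * \<delta>" using pi_less_4 d by simp
      also have "\<dots> \<le> 2 * (\<delta> * P)"
      proof -
        have "1 \<le> P" unfolding P_def by (rule ge_one_powr_ge_zero) (use False r assms in auto)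
        then show ?thesis using d by simp
      qed
      also have "\<dots> \<le> max C 2 * (\<delta> * P)" using d P0 by (intro mult_right_mono) auto
      finally show ?thesis .
    qed
    show "\<bar>integral {0..pi} (\<lambda>\<theta>. Dd \<delta> (r * cos \<theta>) * cos \<theta> * (sin \<theta>) ^ (d - 2))\<bar>
       \<le> max C 2 * \<delta> powr ((real d + 1) / 2) / r powr ((real d - 1) / 2)"
      using goal R unfolding I_def by (simp add: times_divide_eq_right[symmetric])
  qed
qed


end
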